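(* Assume condition (C) holds, so that $f$ is well defined. If $f(i)>0$ for some $i\in\mathbb Z_+$, then $f(j)>0$ for every $j\in\mathbb Z_+$.
   Context: Let $\mathbb Z_+=\{0,1,2,\dots\}$. Let $Q$ be a nonnegative transition kernel on $\mathbb Z_+$: $Q(i,j)\ge 0$ and $0<Q(i,\mathbb Z_+):=\sum_{j\ge0}Q(i,j)<\infty$ for every $i$, and $Q$ is irreducible (for all $i,j$ there is $n\ge1$ with $Q^n(i,j)>0$). Let $P(i,j):=Q(i,j)/Q(i,\mathbb Z_+)$ and let $(X_n)_{n\ge0}$ be a Markov chain on $\mathbb Z_+$ with transition matrix $P$; $\mathbb P_i,\mathbb E_i$ denote probability and expectation given $X_0=i$. Condition (C): for every $i$, $\mathbb E_i\prod_{n=0}^\infty \max(Q(X_n,\mathbb Z_+),1)<\infty$. Under (C) define $f(i):=\mathbb E_i\prod_{n=0}^\infty Q(X_n,\mathbb Z_+)\in[0,\infty)$. *)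

theory Defs
  imports "HOL-Probability.Probability"
begin

definition rowmass :: "(nat \<Rightarrow> nat \<Rightarrow> real) \<Rightarrow> nat \<Rightarrow> real" where
  "rowmass Q i = (\<Sum>j. Q i j)"

definition nonneg_kernel :: "(nat \<Rightarrow> nat \<Rightarrow> real) \<Rightarrow> bool" where
  "nonneg_kernel Q \<longleftrightarrow> (\<forall>i j. 0 \<le> Q i j) \<and> (\<forall>i. summable (Q i) \<and> 0 < rowmass Q i)"

text \<open>Matrix powers of Q, computed in [0,\<infinity>] so that infinite sums are always meaningful.\<close>
fun kpow :: "(nat \<Rightarrow> nat \<Rightarrow> real) \<Rightarrow> nat \<Rightarrow> nat \<Rightarrow> nat \<Rightarrow> ennreal" where
  "kpow Q 0 i j = (if i = j then 1 else 0)"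
| "kpow Q (Suc n) i j = (\<Sum>k. kpow Q n i k * ennreal (Q k j))"

definition irreducible_kernel :: "(nat \<Rightarrow> nat \<Rightarrow> real) \<Rightarrow> bool" where
  "irreducible_kernel Q \<longleftrightarrow> (\<forall>i j. \<exists>n\<ge>1. kpow Q n i j > 0)"

definition stoch :: "(nat \<Rightarrow> nat \<Rightarrow> real) \<Rightarrow> nat \<Rightarrow> nat \<Rightarrow> real" where
  "stoch Q i j = Q i j / rowmass Q i"

definition markov_chain_from ::
  "'a measure \<Rightarrow> (nat \<Rightarrow> 'a \<Rightarrow> nat) \<Rightarrow> (nat \<Rightarrow> nat \<Rightarrow> real) \<Rightarrow> nat \<Rightarrow> bool" where
  "markov_chain_from M X P i \<longleftrightarrow> prob_space M \<and>
     (\<forall>n. X n \<in> measurable M (count_space UNIV)) \<and>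
     (\<forall>n xs. measure M {\<omega> \<in> space M. \<forall>k\<le>n. X k \<omega> = xs k} =
        (if xs 0 = i then (\<Prod>k<n. P (xs k) (xs (Suc k))) else 0))"

definition infprod :: "(nat \<Rightarrow> real) \<Rightarrow> ennreal" where
  "infprod g = lim (\<lambda>N. \<Prod>n<N. ennreal (g n))"

definition condC ::
  "(nat \<Rightarrow> nat \<Rightarrow> real) \<Rightarrow> (nat \<Rightarrow> 'a measure) \<Rightarrow> (nat \<Rightarrow> nat \<Rightarrow> 'a \<Rightarrow> nat) \<Rightarrow> bool" where
  "condC Q M X \<longleftrightarrow> (\<forall>i. (\<integral>\<^sup>+\<omega>. infprod (\<lambda>n. max (rowmass Q (X i n \<omega>)) 1) \<partial>M i) < \<infinity>)"

definition fval ::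
  "(nat \<Rightarrow> nat \<Rightarrow> real) \<Rightarrow> (nat \<Rightarrow> 'a measure) \<Rightarrow> (nat \<Rightarrow> nat \<Rightarrow> 'a \<Rightarrow> nat) \<Rightarrow> nat \<Rightarrow> ennreal" where
  "fval Q M X i = (\<integral>\<^sup>+\<omega>. infprod (\<lambda>n. rowmass Q (X i n \<omega>)) \<partial>M i)"

end

theory Submission imports Defs begin

definition qq :: "(nat \<Rightarrow> real) \<Rightarrow> nat \<Rightarrow> (nat \<Rightarrow> nat) \<Rightarrow> ennreal" where
  "qq r N x = (\<Prod>k<N. ennreal (max (r (x k)) 1))"
definition mm :: "(nat \<Rightarrow> real) \<Rightarrow> nat \<Rightarrow> (nat \<Rightarrow> nat) \<Rightarrow> ennreal" where
  "mm r N x = (\<Prod>k<N. ennreal (min (r (x k)) 1))"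

lemma qq_inc: "incseq (\<lambda>N. qq r N x)"
proof (rule incseq_SucI)
  fix N
  have "qq r N x * 1 \<le> qq r N x * ennreal (max (r (x N)) 1)"
    by (intro mult_left_mono) auto
  then show "qq r N x \<le> qq r (Suc N) x" by (simp add: qq_def)
qed

lemma mm_dec: "decseq (\<lambda>N. mm r N x)"
proof (rule decseq_SucI)
  fix N
  have "mm r N x * ennreal (min (r (x N)) 1) \<le> mm r N x * 1"
    by (intro mult_left_mono) auto
  then show "mm r (Suc N) x \<le> mm r N x" by (simp add: mm_def)
qed

lemma mm_le1: "mm r N x \<le> 1"
  unfolding mm_def by (rule prod_le_1) auto

lemma infprod_max: "infprod (\<lambda>n. max (r (x n)) 1) = (SUP N. qq r N x)"
  unfolding infprod_def qq_def[symmetric]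
  by (rule limI, rule LIMSEQ_SUP, rule qq_inc)

lemma infprod_r:
  assumes nn: "\<And>k. 0 \<le> r k" and fin: "(SUP N. qq r N x) < \<infinity>"
  shows "infprod (\<lambda>n. r (x n)) = (SUP N. qq r N x) * (INF N. mm r N x)"
proof -
  have eq: "(\<Prod>n<N. ennreal (r (x n))) = qq r N x * mm r N x" for N
  proof -
    have "(\<Prod>n<N. ennreal (r (x n))) = (\<Prod>n<N. ennreal (max (r (x n)) 1) * ennreal (min (r (x n)) 1))"
    proof (rule prod.cong[OF refl])
      fix n
      have "r (x n) = max (r (x n)) 1 * min (r (x n)) 1" using nn[of "x n"]
        by (cases "r (x n) \<le> 1") (auto simp: max_def min_def)
      then show "ennreal (r (x n)) = ennreal (max (r (x n)) 1) * ennreal (min (r (x n)) 1)"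
      proof -
        have "0 \<le> max (r (x n)) 1" "0 \<le> min (r (x n)) 1" using nn[of "x n"] by auto
        from ennreal_mult[OF this] \<open>r (x n) = _\<close> show ?thesis by simp
      qed
    qed
    then show ?thesis by (simp add: qq_def mm_def prod.distrib)
  qed
  have le1: "(INF N. mm r N x) \<le> 1" by (rule INF_lower2[of 0]) (auto simp: mm_le1)
  have a: "(INF N. mm r N x) \<noteq> \<infinity>" using le_less_trans[OF le1 ennreal_one_less_top]
    unfolding infinity_ennreal_def by (simp only: less_top)
  have b: "(SUP N. qq r N x) \<noteq> \<infinity>" using fin unfolding infinity_ennreal_def by (simp only: less_top)
  have "(\<lambda>N. qq r N x * mm r N x) \<longlonglongrightarrow> (SUP N. qq r N x) * (INF N. mm r N x)"
    by (rule tendsto_mult_ennreal[OF LIMSEQ_SUP[OF qq_inc] LIMSEQ_INF[OF mm_dec]]) (use a b in blast)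
  then show ?thesis unfolding infprod_def eq by (rule limI)
qed

lemma comp_meas:
  assumes "Y \<in> measurable M (count_space UNIV)" "g \<in> UNIV \<rightarrow> space N'"
  shows "(\<lambda>\<omega>. g (Y \<omega>)) \<in> measurable M N'"
  using measurable_compose[OF assms(1), of g N'] assms(2) by simp

lemma qq_meas:
  assumes "\<And>k. Y k \<in> measurable M (count_space UNIV)"
  shows "(\<lambda>\<omega>. qq r N (\<lambda>n. Y n \<omega>)) \<in> borel_measurable M"
    and "(\<lambda>\<omega>. mm r N (\<lambda>n. Y n \<omega>)) \<in> borel_measurable M"
  unfolding qq_def mm_def
  by (intro borel_measurable_prod_ennreal comp_meas[OF assms]; simp)+

lemma pos_iff:
  assumes Ym: "\<And>k. Y k \<in> measurable M (count_space UNIV)"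
    and nn: "\<And>k. 0 \<le> r k"
    and C: "(\<integral>\<^sup>+\<omega>. infprod (\<lambda>n. max (r (Y n \<omega>)) 1) \<partial>M) < \<infinity>"
  shows "(\<integral>\<^sup>+\<omega>. infprod (\<lambda>n. r (Y n \<omega>)) \<partial>M) = 0 \<longleftrightarrow>
         (\<integral>\<^sup>+\<omega>. (INF N. mm r N (\<lambda>n. Y n \<omega>)) \<partial>M) = 0"
proof -
  note [measurable] = qq_meas[OF Ym]
  have C': "(\<integral>\<^sup>+\<omega>. (SUP N. qq r N (\<lambda>n. Y n \<omega>)) \<partial>M) \<noteq> \<infinity>"
  proof -
    have "infprod (\<lambda>n. max (r (Y n \<omega>)) 1) = (SUP N. qq r N (\<lambda>n. Y n \<omega>))" for \<omega>
      using infprod_max[of r "\<lambda>n. Y n \<omega>"] by simp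
    then show ?thesis using C by (simp add: less_top)
  qed
  have ae: "AE \<omega> in M. (SUP N. qq r N (\<lambda>n. Y n \<omega>)) \<noteq> \<infinity>"
    by (rule nn_integral_PInf_AE[OF _ C']) measurable
  have eq: "(\<integral>\<^sup>+\<omega>. infprod (\<lambda>n. r (Y n \<omega>)) \<partial>M) =
      (\<integral>\<^sup>+\<omega>. (SUP N. qq r N (\<lambda>n. Y n \<omega>)) * (INF N. mm r N (\<lambda>n. Y n \<omega>)) \<partial>M)"
    apply (rule nn_integral_cong_AE)
    using ae
  proof eventually_elim
    case (elim \<omega>)
    then have "(SUP N. qq r N (\<lambda>n. Y n \<omega>)) < \<infinity>" by (simp only: less_top infinity_ennreal_def)
    from infprod_r[OF nn this] show ?case by simp
  qed
  have ge1: "1 \<le> (SUP N. qq r N x)" for x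
    by (rule SUP_upper2[of 0]) (auto simp: qq_def)
  have z: "(SUP N. qq r N x) * (INF N. mm r N x) = 0 \<longleftrightarrow> (INF N. mm r N x) = 0" for x
    using ge1[of x] by (auto simp: mult_eq_0_iff)
  show ?thesis unfolding eq
    by (subst nn_integral_0_iff_AE, measurable)+ (simp only: z)
qed


lemma prod_split_add:
  "(\<Prod>k<n+N. f k) = (\<Prod>k<n. f k) * (\<Prod>k<N. f (n+k)) " for f :: "nat \<Rightarrow> real"
  by (induction N) (auto simp: mult.assoc)

lemma map_upt_eq: "map f [0..<Suc N] = ys \<longleftrightarrow> length ys = Suc N \<and> (\<forall>k\<le>N. f k = ys ! k)"
  by (auto simp: list_eq_iff_nth_eq less_Suc_eq_le simp del: upt_Suc)

lemma key_measure:
  assumes mj: "markov_chain_from Mj Yj P j" and mi: "markov_chain_from Mi Yi P i"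
    and s0: "s 0 = j" and sn: "s n = i"
  shows "measure Mj {\<omega>\<in>space Mj. (\<forall>k\<le>n. Yj k \<omega> = s k) \<and> map (\<lambda>k. Yj (n+k) \<omega>) [0..<Suc N] = ys}
       = (\<Prod>k<n. P (s k) (s (Suc k))) * measure Mi {\<omega>\<in>space Mi. map (\<lambda>k. Yi k \<omega>) [0..<Suc N] = ys}"
proof (cases "length ys = Suc N")
  case False
  then show ?thesis by (simp add: map_upt_eq del: upt_Suc)
next
  case len: True
  have fi: "measure Mi {\<omega>\<in>space Mi. \<forall>k\<le>N. Yi k \<omega> = ys ! k} =
     (if ys ! 0 = i then (\<Prod>k<N. P (ys ! k) (ys ! Suc k)) else 0)"
    using mi unfolding markov_chain_from_def by blast
  have Ri: "{\<omega>\<in>space Mi. map (\<lambda>k. Yi k \<omega>) [0..<Suc N] = ys} = {\<omega>\<in>space Mi. \<forall>k\<le>N. Yi k \<omega> = ys ! k}"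
    using len by (simp add: map_upt_eq del: upt_Suc)
  show ?thesis
  proof (cases "ys ! 0 = i")
    case False
    have "{\<omega>\<in>space Mj. (\<forall>k\<le>n. Yj k \<omega> = s k) \<and> map (\<lambda>k. Yj (n+k) \<omega>) [0..<Suc N] = ys} = {}"
      using False sn len by (auto simp: map_upt_eq simp del: upt_Suc)
    then show ?thesis using fi Ri False by (simp only:) simp
  next
    case True
    define xs where "xs k = (if k \<le> n then s k else ys ! (k - n))" for k
    have fj: "measure Mj {\<omega>\<in>space Mj. \<forall>k\<le>n+N. Yj k \<omega> = xs k} =
       (if xs 0 = j then (\<Prod>k<n+N. P (xs k) (xs (Suc k))) else 0)"
      using mj unfolding markov_chain_from_def by blast
    have Rj: "{\<omega>\<in>space Mj. (\<forall>k\<le>n. Yj k \<omega> = s k) \<and> map (\<lambda>k. Yj (n+k) \<omega>) [0..<Suc N] = ys}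
       = {\<omega>\<in>space Mj. \<forall>k\<le>n+N. Yj k \<omega> = xs k}"
    proof (intro Collect_cong conj_cong refl iffI)
      fix \<omega> assume a: "(\<forall>k\<le>n. Yj k \<omega> = s k) \<and> map (\<lambda>k. Yj (n+k) \<omega>) [0..<Suc N] = ys"
      show "\<forall>k\<le>n+N. Yj k \<omega> = xs k"
      proof (intro allI impI)
        fix k assume "k \<le> n + N"
        then show "Yj k \<omega> = xs k"
          using a len by (cases "k \<le> n") (auto simp: xs_def map_upt_eq simp del: upt_Suc dest: spec[of _ "k - n"])
      qed
    next
      fix \<omega> assume a: "\<forall>k\<le>n+N. Yj k \<omega> = xs k"
      have 1: "\<forall>k\<le>n. Yj k \<omega> = s k" using a by (auto simp: xs_def)
      have "\<forall>k\<le>N. Yj (n+k) \<omega> = ys ! k"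
      proof (intro allI impI)
        fix k assume "k \<le> N"
        then show "Yj (n+k) \<omega> = ys ! k"
          using a[rule_format, of "n+k"] True sn by (cases k) (auto simp: xs_def)
      qed
      with 1 len show "(\<forall>k\<le>n. Yj k \<omega> = s k) \<and> map (\<lambda>k. Yj (n+k) \<omega>) [0..<Suc N] = ys"
        by (simp add: map_upt_eq del: upt_Suc)
    qed
    have "(\<Prod>k<n+N. P (xs k) (xs (Suc k))) = (\<Prod>k<n. P (s k) (s (Suc k))) * (\<Prod>k<N. P (ys ! k) (ys ! Suc k))"
    proof -
      have "(\<Prod>k<n. P (xs k) (xs (Suc k))) = (\<Prod>k<n. P (s k) (s (Suc k)))"
        by (rule prod.cong) (auto simp: xs_def)
      moreover have "(\<Prod>k<N. P (xs (n+k)) (xs (Suc (n+k)))) = (\<Prod>k<N. P (ys ! k) (ys ! Suc k))"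
        by (rule prod.cong) (use True sn in \<open>auto simp: xs_def\<close>)
      ultimately show ?thesis by (simp add: prod_split_add[where f="\<lambda>k. P (xs k) (xs (Suc k))"])
    qed
    then show ?thesis using fi fj Ri Rj True s0 by (simp add: xs_def)
  qed
qed

lemma map_meas:
  fixes Y :: "nat \<Rightarrow> 'a \<Rightarrow> nat"
  assumes Ym: "\<And>k. Y k \<in> measurable M (count_space UNIV)"
  shows "(\<lambda>\<omega>. map (\<lambda>k. Y (n+k) \<omega>) [0..<Suc N]) \<in> measurable M (count_space UNIV)"
proof (rule measurable_count_space_eq2_countable[THEN iffD2], intro conjI ballI)
  fix ys :: "nat list"
  note [measurable] = Ym
  have "(\<lambda>\<omega>. map (\<lambda>k. Y (n+k) \<omega>) [0..<Suc N]) -` {ys} \<inter> space M =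
     {\<omega>\<in>space M. length ys = Suc N \<and> (\<forall>k\<le>N. Y (n+k) \<omega> = ys ! k)}"
    by (auto simp: map_upt_eq simp del: upt_Suc)
  also have "\<dots> \<in> sets M" by measurable
  finally show "(\<lambda>\<omega>. map (\<lambda>k. Y (n+k) \<omega>) [0..<Suc N]) -` {ys} \<inter> space M \<in> sets M" .
qed auto

lemma transfer:
  assumes mj: "markov_chain_from Mj Yj P j" and mi: "markov_chain_from Mi Yi P i"
    and s0: "s 0 = j" and sn: "s n = i" and Pnn: "\<And>a b. 0 \<le> P a b"
  shows "(\<integral>\<^sup>+\<omega>. indicator {\<omega>\<in>space Mj. \<forall>k\<le>n. Yj k \<omega> = s k} \<omega> * h (map (\<lambda>k. Yj (n+k) \<omega>) [0..<Suc N]) \<partial>Mj)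
     = ennreal (\<Prod>k<n. P (s k) (s (Suc k))) * (\<integral>\<^sup>+\<omega>. h (map (\<lambda>k. Yi k \<omega>) [0..<Suc N]) \<partial>Mi)"
proof -
  have pj: "prob_space Mj" and pi: "prob_space Mi" using mj mi unfolding markov_chain_from_def by auto
  have Ymj[measurable]: "\<And>k. Yj k \<in> measurable Mj (count_space UNIV)" using mj unfolding markov_chain_from_def by auto
  have Ymi[measurable]: "\<And>k. Yi k \<in> measurable Mi (count_space UNIV)" using mi unfolding markov_chain_from_def by auto
  define Pre where "Pre = {\<omega>\<in>space Mj. \<forall>k\<le>n. Yj k \<omega> = s k}"
  define Fj where "Fj \<omega> = map (\<lambda>k. Yj (n+k) \<omega>) [0..<Suc N]" for \<omega>
  define Fi where "Fi \<omega> = map (\<lambda>k. Yi (0+k) \<omega>) [0..<Suc N]" for \<omega>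
  define c where "c = (\<Prod>k<n. P (s k) (s (Suc k)))"
  have c0: "0 \<le> c" unfolding c_def by (rule prod_nonneg) (use Pnn in auto)
  have Fjm[measurable]: "Fj \<in> measurable Mj (count_space UNIV)" unfolding Fj_def by (rule map_meas[OF Ymj])
  have Fim[measurable]: "Fi \<in> measurable Mi (count_space UNIV)" unfolding Fi_def by (rule map_meas[OF Ymi])
  have Prem[measurable]: "Pre \<in> sets Mj" unfolding Pre_def by measurable
  define \<nu>1 where "\<nu>1 = distr (density Mj (indicator Pre)) (count_space UNIV) Fj"
  define \<nu>2 where "\<nu>2 = density (distr Mi (count_space UNIV) Fi) (\<lambda>_. ennreal c)"
  have "\<nu>1 = \<nu>2"
  proof (rule measure_eqI_countable[where A=UNIV])
    show "sets \<nu>1 = Pow UNIV" "sets \<nu>2 = Pow UNIV" by (simp_all add: \<nu>1_def \<nu>2_def)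
    show "countable (UNIV :: nat list set)" by simp
  next
    fix ys :: "nat list"
    have "emeasure \<nu>1 {ys} = emeasure (density Mj (indicator Pre)) (Fj -` {ys} \<inter> space Mj)"
      unfolding \<nu>1_def by (subst emeasure_distr) auto
    also have "\<dots> = (\<integral>\<^sup>+x. indicator Pre x * indicator (Fj -` {ys} \<inter> space Mj) x \<partial>Mj)"
      by (subst emeasure_density) (auto intro: measurable_sets)
    also have "\<dots> = (\<integral>\<^sup>+x. indicator (Pre \<inter> (Fj -` {ys} \<inter> space Mj)) x \<partial>Mj)"
      by (simp add: indicator_inter_arith)
    also have "\<dots> = emeasure Mj (Pre \<inter> (Fj -` {ys} \<inter> space Mj))"
      by (rule nn_integral_indicator) (auto intro: measurable_sets)
    also have "Pre \<inter> (Fj -` {ys} \<inter> space Mj) =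
        {\<omega>\<in>space Mj. (\<forall>k\<le>n. Yj k \<omega> = s k) \<and> map (\<lambda>k. Yj (n+k) \<omega>) [0..<Suc N] = ys}"
      by (auto simp: Pre_def Fj_def simp del: upt_Suc)
    also have "emeasure Mj \<dots> = ennreal (measure Mj \<dots>)"
      by (rule finite_measure.emeasure_eq_measure[OF prob_space.axioms(1)[OF pj]])
    also have "\<dots> = ennreal (c * measure Mi {\<omega>\<in>space Mi. map (\<lambda>k. Yi k \<omega>) [0..<Suc N] = ys})"
      unfolding c_def by (subst key_measure[OF mj mi s0 sn]) simp
    also have "\<dots> = ennreal c * emeasure Mi {\<omega>\<in>space Mi. map (\<lambda>k. Yi k \<omega>) [0..<Suc N] = ys}"
      by (simp add: ennreal_mult c0 finite_measure.emeasure_eq_measure[OF prob_space.axioms(1)[OF pi]])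
    also have "{\<omega>\<in>space Mi. map (\<lambda>k. Yi k \<omega>) [0..<Suc N] = ys} = Fi -` {ys} \<inter> space Mi"
      by (auto simp: Fi_def simp del: upt_Suc)
    also have "ennreal c * emeasure Mi (Fi -` {ys} \<inter> space Mi) = emeasure \<nu>2 {ys}"
      unfolding \<nu>2_def
      by (subst emeasure_density) (auto simp: nn_integral_cmult_indicator emeasure_distr)
    finally show "emeasure \<nu>1 {ys} = emeasure \<nu>2 {ys}" .
  qed
  have "(\<integral>\<^sup>+ys. h ys \<partial>\<nu>1) = (\<integral>\<^sup>+\<omega>. indicator Pre \<omega> * h (Fj \<omega>) \<partial>Mj)"
    unfolding \<nu>1_def
    by (subst nn_integral_distr) (auto simp: nn_integral_density intro!: measurable_compose[OF Fjm])
  moreover have "(\<integral>\<^sup>+ys. h ys \<partial>\<nu>2) = ennreal c * (\<integral>\<^sup>+\<omega>. h (Fi \<omega>) \<partial>Mi)"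
    unfolding \<nu>2_def
    by (subst nn_integral_density) (auto simp: nn_integral_distr nn_integral_cmult)
  ultimately show ?thesis using \<open>\<nu>1 = \<nu>2\<close> by (simp add: Pre_def Fj_def Fi_def c_def)
qed


lemma I_eq:
  assumes ps: "prob_space M" and Ym: "\<And>k. Y k \<in> measurable M (count_space UNIV)"
  shows "(\<integral>\<^sup>+\<omega>. (INF N. mm r N (\<lambda>n. Y n \<omega>)) \<partial>M) = (INF N. \<integral>\<^sup>+\<omega>. mm r N (\<lambda>n. Y n \<omega>) \<partial>M)"
proof (rule nn_integral_monotone_convergence_INF_AE')
  show "AE x in M. mm r (Suc i) (\<lambda>n. Y n x) \<le> mm r i (\<lambda>n. Y n x)" for i
    using mm_dec[of r] by (auto simp: decseq_Suc_iff)
  show "(\<lambda>\<omega>. mm r i (\<lambda>n. Y n \<omega>)) \<in> borel_measurable M" for i by (rule qq_meas(2)[OF Ym])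
  have "(\<integral>\<^sup>+ x. mm r 0 (\<lambda>n. Y n x) \<partial>M) = (\<integral>\<^sup>+ x. 1 \<partial>M)" by (simp add: mm_def)
  also have "\<dots> = 1" using ps by (simp add: prob_space.emeasure_space_1)
  finally show "(\<integral>\<^sup>+ x. mm r 0 (\<lambda>n. Y n x) \<partial>M) < \<infinity>" by simp
qed

lemma kpow_path:
  "kpow Q n a b > 0 \<Longrightarrow> \<exists>s. s 0 = a \<and> s n = b \<and> (\<forall>k<n. Q (s k) (s (Suc k)) > 0)"
proof (induction n arbitrary: b)
  case 0
  then show ?case by (auto split: if_splits intro!: exI[of _ "\<lambda>_. a"])
next
  case (Suc n)
  have "\<exists>k. kpow Q n a k * ennreal (Q k b) \<noteq> 0"
  proof (rule ccontr)
    assume "\<not> ?thesis"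
    then have "(\<lambda>k. kpow Q n a k * ennreal (Q k b)) = (\<lambda>_. 0)" by auto
    then have "kpow Q (Suc n) a b = 0" by simp
    with Suc.prems show False by simp
  qed
  then obtain k where k: "kpow Q n a k \<noteq> 0" "ennreal (Q k b) \<noteq> 0" by auto
  from k(2) have q: "Q k b > 0" by (simp add: ennreal_eq_0_iff)
  from k(1) obtain s where s: "s 0 = a" "s n = k" "\<forall>m<n. Q (s m) (s (Suc m)) > 0"
    using Suc.IH[of k] by (auto simp: zero_less_iff_neq_zero)
  show ?case
    by (rule exI[of _ "s(Suc n := b)"]) (use s q in \<open>auto simp: less_Suc_eq\<close>)
qed

lemma mm_split: "mm r (n+K) x = mm r n x * mm r K (\<lambda>k. x (n+k))"
  unfolding mm_def by (induction K) (auto simp: mult.assoc)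


theorem proposition1:
  fixes Q :: "nat \<Rightarrow> nat \<Rightarrow> real"
    and M :: "nat \<Rightarrow> 'a measure"
    and X :: "nat \<Rightarrow> nat \<Rightarrow> 'a \<Rightarrow> nat"
  assumes kernel: "nonneg_kernel Q"
    and irred: "irreducible_kernel Q"
    and chain: "\<And>i. markov_chain_from (M i) (X i) (stoch Q) i"
    and C: "condC Q M X"
    and pos: "fval Q M X i > 0"
  shows "fval Q M X j > 0"
proof -
  define r where "r = rowmass Q"
  have rpos: "\<And>k. 0 < r k" using kernel unfolding nonneg_kernel_def r_def by auto
  have Qnn: "\<And>a b. 0 \<le> Q a b" using kernel unfolding nonneg_kernel_def by auto
  have Pnn: "\<And>a b. 0 \<le> stoch Q a b" unfolding stoch_def
    using Qnn rpos unfolding r_def by (simp add: less_imp_le)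
  have ps: "\<And>l. prob_space (M l)" using chain unfolding markov_chain_from_def by auto
  have Ym: "\<And>l k. X l k \<in> measurable (M l) (count_space UNIV)"
    using chain unfolding markov_chain_from_def by auto
  define I where "I l = (\<integral>\<^sup>+\<omega>. (INF N. mm r N (\<lambda>n. X l n \<omega>)) \<partial>M l)" for l
  have f0: "fval Q M X l = 0 \<longleftrightarrow> I l = 0" for l
    unfolding fval_def I_def r_def
    by (rule pos_iff[OF Ym]) (use rpos C in \<open>auto simp: condC_def r_def less_imp_le\<close>)
  have Ieq: "I l = (INF N. \<integral>\<^sup>+\<omega>. mm r N (\<lambda>n. X l n \<omega>) \<partial>M l)" for l
    unfolding I_def by (rule I_eq[OF ps Ym])
  have Ii: "I i \<noteq> 0" using pos f0[of i] by auto
  from irred obtain n where "kpow Q n j i > 0" unfolding irreducible_kernel_def by blast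
  from kpow_path[OF this] obtain s where s0: "s 0 = j" and sn: "s n = i"
    and sQ: "\<forall>k<n. Q (s k) (s (Suc k)) > 0" by blast
  define c where "c = (\<Prod>k<n. stoch Q (s k) (s (Suc k)))"
  define C1 where "C1 = (\<Prod>k<n. ennreal (min (r (s k)) 1))"
  have cpos: "c > 0" unfolding c_def stoch_def
    by (rule prod_pos) (use sQ rpos in \<open>auto simp: r_def\<close>)
  have C1pos: "C1 \<noteq> 0" unfolding C1_def using rpos by (auto simp: ennreal_eq_0_iff not_le)
  define Pre where "Pre = {\<omega>\<in>space (M j). \<forall>k\<le>n. X j k \<omega> = s k}"
  have bound: "C1 * ennreal c * I i \<le> (\<integral>\<^sup>+\<omega>. mm r K (\<lambda>m. X j m \<omega>) \<partial>M j)" for K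
  proof -
    define h where "h ys = (\<Prod>k<K. ennreal (min (r (ys ! k)) 1))" for ys
    have hm: "(\<lambda>\<omega>. indicator Pre \<omega> * h (map (\<lambda>k. X j (n+k) \<omega>) [0..<Suc K])) \<in> borel_measurable (M j)"
    proof -
      have [measurable]: "Pre \<in> sets (M j)" unfolding Pre_def using Ym[of j] by measurable
      have "(\<lambda>\<omega>. h (map (\<lambda>k. X j (n+k) \<omega>) [0..<Suc K])) \<in> borel_measurable (M j)"
        by (rule comp_meas[OF map_meas[OF Ym]]) simp
      then show ?thesis by measurable
    qed
    have e1: "(\<integral>\<^sup>+\<omega>. mm r K (\<lambda>m. X i m \<omega>) \<partial>M i) = (\<integral>\<^sup>+\<omega>. h (map (\<lambda>k. X i k \<omega>) [0..<Suc K]) \<partial>M i)"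
      by (rule nn_integral_cong) (simp add: h_def mm_def nth_map_upt del: upt_Suc)
    have e2: "ennreal c * (\<integral>\<^sup>+\<omega>. h (map (\<lambda>k. X i k \<omega>) [0..<Suc K]) \<partial>M i) = (\<integral>\<^sup>+\<omega>. indicator Pre \<omega> * h (map (\<lambda>k. X j (n+k) \<omega>) [0..<Suc K]) \<partial>M j)"
      unfolding c_def Pre_def by (rule transfer[OF chain chain s0 sn Pnn, symmetric])
    have "C1 * ennreal c * I i \<le> C1 * ennreal c * (\<integral>\<^sup>+\<omega>. mm r K (\<lambda>m. X i m \<omega>) \<partial>M i)"
      by (intro mult_left_mono) (auto simp: Ieq intro: INF_lower)
    also have "\<dots> = C1 * (\<integral>\<^sup>+\<omega>. indicator Pre \<omega> * h (map (\<lambda>k. X j (n+k) \<omega>) [0..<Suc K]) \<partial>M j)"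
      by (simp only: e1 e2[symmetric] mult.assoc)
    also have "\<dots> = (\<integral>\<^sup>+\<omega>. C1 * (indicator Pre \<omega> * h (map (\<lambda>k. X j (n+k) \<omega>) [0..<Suc K])) \<partial>M j)"
      by (rule nn_integral_cmult[OF hm, symmetric])
    also have "\<dots> \<le> (\<integral>\<^sup>+\<omega>. mm r (n+K) (\<lambda>m. X j m \<omega>) \<partial>M j)"
    proof (rule nn_integral_mono)
      fix \<omega> assume "\<omega> \<in> space (M j)"
      show "C1 * (indicator Pre \<omega> * h (map (\<lambda>k. X j (n+k) \<omega>) [0..<Suc K])) \<le> mm r (n+K) (\<lambda>m. X j m \<omega>)"
      proof (cases "\<omega> \<in> Pre")
        case True
        have "mm r n (\<lambda>m. X j m \<omega>) = C1" unfolding mm_def C1_def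
          by (rule prod.cong) (use True in \<open>auto simp: Pre_def\<close>)
        moreover have "mm r K (\<lambda>k. X j (n+k) \<omega>) = h (map (\<lambda>k. X j (n+k) \<omega>) [0..<Suc K])"
          by (simp add: h_def mm_def nth_map_upt del: upt_Suc)
        ultimately show ?thesis using True by (simp add: mm_split)
      qed simp
    qed
    also have "\<dots> \<le> (\<integral>\<^sup>+\<omega>. mm r K (\<lambda>m. X j m \<omega>) \<partial>M j)"
      by (rule nn_integral_mono) (use mm_dec[of r] in \<open>auto simp: decseq_def\<close>)
    finally show ?thesis .
  qed
  have "C1 * ennreal c * I i \<le> I j" unfolding Ieq[of j] by (rule INF_greatest) (rule bound)
  moreover have "C1 * ennreal c * I i \<noteq> 0" using C1pos cpos Ii by (simp add: ennreal_eq_0_iff not_le)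
  ultimately have "I j \<noteq> 0" by (metis le_zero_eq)
  then show ?thesis using f0[of j] by (simp add: zero_less_iff_neq_zero)
qed

end
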